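(* Let $p$ be an odd prime, $G=\mathrm{PGL}_n(\mathbb{C})$ where $p^s\mid n$, $p^{s+1}\nmid n$, $s\ge1$. Let $\bar A$ be a toral elementary abelian $p$-subgroup of $G$ of rank $r$ with $1\le r\le s$. If $C_G(\bar A)$ is connected, then $\bar A$ contains an element of order $p$ not $G$-conjugate to $e_{n/p}$.
   Context: Toral: contained in a maximal torus. With $\alpha=e^{2\pi i/p}$ and $n=pk$, $e_{n/p}$ is the image in $G$ of $\mathrm{diag}(I_k,\alpha I_k,\dots,\alpha^{p-1}I_k)$. *)

theory Defs
  imports "HOL-Analysis.Analysis" "HOL-Algebra.Multiplicative_Group"
begin

text \<open>PGL_n(C) with n = CARD('n): elements are classes of invertible matrices modulo
  nonzero scalars; the group law multiplies representatives.\<close>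

definition pcls :: "complex^'n^'n \<Rightarrow> (complex^'n^'n) set" where
  "pcls M = {(\<chi> i j. c * M $ i $ j) | c. c \<noteq> 0}"

definition PGL :: "(complex^'n::finite^'n) set monoid" where
  "PGL = \<lparr> carrier = {pcls M | M. invertible M},
           mult = (\<lambda>X Y. {A ** B | A B. A \<in> X \<and> B \<in> Y}),
           one = pcls (mat 1) \<rparr>"

definition PGL_top :: "(complex^'n::finite^'n) set topology" where
  "PGL_top = topology (\<lambda>U. U \<subseteq> carrier PGL \<and>
       open {M. invertible M \<and> pcls M \<in> U})"

definition diag_mat :: "('n \<Rightarrow> complex) \<Rightarrow> complex^'n^'n" where
  "diag_mat d = (\<chi> i j. if i = j then d i else 0)"

text \<open>The image of the diagonal torus; the maximal tori are exactly its conjugates.\<close>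

definition diag_torus :: "(complex^'n::finite^'n) set set" where
  "diag_torus = {pcls (diag_mat d) | d. \<forall>i. d i \<noteq> 0}"

definition maximal_torus :: "(complex^'n::finite^'n) set set \<Rightarrow> bool" where
  "maximal_torus T \<longleftrightarrow> (\<exists>g \<in> carrier PGL.
      T = (\<lambda>t. g \<otimes>\<^bsub>PGL\<^esub> t \<otimes>\<^bsub>PGL\<^esub> inv\<^bsub>PGL\<^esub> g) ` diag_torus)"

definition toral :: "(complex^'n::finite^'n) set set \<Rightarrow> bool" where
  "toral A \<longleftrightarrow> (\<exists>T. maximal_torus T \<and> A \<subseteq> T)"

definition pgl_centralizer :: "(complex^'n::finite^'n) set set \<Rightarrow> (complex^'n^'n) set set" where
  "pgl_centralizer A = {g \<in> carrier PGL. \<forall>a \<in> A. g \<otimes>\<^bsub>PGL\<^esub> a = a \<otimes>\<^bsub>PGL\<^esub> g}"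

definition elem_abelian_p_subgroup :: "nat \<Rightarrow> nat \<Rightarrow> (complex^'n::finite^'n) set set \<Rightarrow> bool" where
  "elem_abelian_p_subgroup p r A \<longleftrightarrow> subgroup A PGL
     \<and> (\<forall>x \<in> A. \<forall>y \<in> A. x \<otimes>\<^bsub>PGL\<^esub> y = y \<otimes>\<^bsub>PGL\<^esub> x)
     \<and> (\<forall>x \<in> A. x [^]\<^bsub>PGL\<^esub> p = \<one>\<^bsub>PGL\<^esub>)
     \<and> finite A \<and> card A = p ^ r"

text \<open>A fixed enumeration of the index type, used to order the basis.\<close>

definition idx :: "'n::finite \<Rightarrow> nat" where
  "idx = (SOME f. bij_betw f (UNIV::'n set) {..<CARD('n)})"

text \<open>e_{n/p}: image of diag(I_k, alpha I_k, ..., alpha^(p-1) I_k), n = p k, alpha = e^(2 pi i/p).\<close>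

definition e_elt :: "nat \<Rightarrow> (complex^'n::finite^'n) set" where
  "e_elt p = pcls (diag_mat (\<lambda>i::'n.
      exp (2 * of_real pi * \<i> / of_nat p) ^ (idx i div (CARD('n) div p))))"

end

theory Submission
  imports Defs
begin


definition smul :: "complex \<Rightarrow> complex^'n^'n \<Rightarrow> complex^'n^'n" where
  "smul c M = (\<chi> i j. c * M $ i $ j)"

lemma pcls_alt: "pcls M = {smul c M | c. c \<noteq> 0}"
  by (simp add: pcls_def smul_def)

lemma smul_nth[simp]: "smul c M $ i $ j = c * M $ i $ j"
  by (simp add: smul_def)

lemma smul_smul[simp]: "smul c (smul d M) = smul (c * d) M"
  by (simp add: vec_eq_iff mult.assoc)

lemma smul_one[simp]: "smul 1 M = M"
  by (simp add: vec_eq_iff)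

lemma smul_mul_left: "smul c A ** B = smul c (A ** B)"
  by (simp add: vec_eq_iff matrix_matrix_mult_def sum_distrib_left mult.assoc)

lemma smul_mul_right: "A ** smul c B = smul c (A ** B)"
  by (simp add: vec_eq_iff matrix_matrix_mult_def sum_distrib_left mult.assoc mult.left_commute)

lemma smul_cancel: "c \<noteq> 0 \<Longrightarrow> smul c A = smul c B \<longleftrightarrow> A = B"
  by (auto simp: vec_eq_iff)

lemma smul_eq_self: "smul c A = A \<Longrightarrow> A \<noteq> 0 \<Longrightarrow> c = 1"
  by (auto simp: vec_eq_iff)

lemma invertible_nz: "invertible (A::complex^'n^'n) \<Longrightarrow> A \<noteq> 0"
proof
  assume "invertible A" "A = 0"
  then obtain B where "A ** B = mat 1" by (auto simp: invertible_def)
  with \<open>A = 0\<close> have "(mat 1 :: complex^'n^'n) = 0" by simp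
  then have "(mat 1 :: complex^'n^'n) $ undefined $ undefined = 0" by simp
  then show False by (simp add: mat_def)
qed

lemma minv: "invertible (A::complex^'n^'n) \<Longrightarrow> A ** matrix_inv A = mat 1 \<and> matrix_inv A ** A = mat 1"
  unfolding invertible_def matrix_inv_def by (rule someI_ex)

lemma matrix_inv_left: "invertible (A::complex^'n^'n) \<Longrightarrow> matrix_inv A ** A = mat 1"
  using minv by blast
lemma matrix_inv_right: "invertible (A::complex^'n^'n) \<Longrightarrow> A ** matrix_inv A = mat 1"
  using minv by blast
lemma invertible_matrix_inv: "invertible (A::complex^'n^'n) \<Longrightarrow> invertible (matrix_inv A)"
  using minv unfolding invertible_def by blast

lemma invertible_smul: "c \<noteq> 0 \<Longrightarrow> invertible M \<Longrightarrow> invertible (smul c M)"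
proof -
  assume c: "c \<noteq> 0" and "invertible M"
  then obtain B where B: "M ** B = mat 1" "B ** M = mat 1" by (auto simp: invertible_def)
  have "smul c M ** smul (inverse c) B = mat 1" "smul (inverse c) B ** smul c M = mat 1"
    using B c by (simp_all add: smul_mul_left smul_mul_right)
  then show ?thesis by (auto simp: invertible_def)
qed

lemma pcls_eq: "pcls M = pcls N \<longleftrightarrow> (\<exists>c. c \<noteq> 0 \<and> N = smul c M)"
proof
  assume "pcls M = pcls N"
  moreover have "N \<in> pcls N" unfolding pcls_alt by (rule CollectI, rule exI[of _ 1]) simp
  ultimately have "N \<in> pcls M" by (simp only:)
  then show "\<exists>c. c \<noteq> 0 \<and> N = smul c M" unfolding pcls_alt by blast
next
  assume "\<exists>c. c \<noteq> 0 \<and> N = smul c M"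
  then obtain c where c: "c \<noteq> 0" "N = smul c M" by auto
  show "pcls M = pcls N"
  proof (unfold pcls_alt, safe)
    fix d :: complex assume "d \<noteq> 0"
    then show "\<exists>e. smul d M = smul e N \<and> e \<noteq> 0"
      using c by (intro exI[of _ "d / c"]) simp
  next
    fix d :: complex assume "d \<noteq> 0"
    then show "\<exists>e. smul d N = smul e M \<and> e \<noteq> 0"
      using c by (intro exI[of _ "d * c"]) simp
  qed
qed

lemma pcls_mult: "pcls M \<otimes>\<^bsub>PGL\<^esub> pcls N = pcls (M ** N)"
proof -
  have "{A ** B | A B. A \<in> pcls M \<and> B \<in> pcls N} = pcls (M ** N)"
  proof (intro equalityI subsetI)
    fix X assume "X \<in> {A ** B | A B. A \<in> pcls M \<and> B \<in> pcls N}"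
    then obtain c d where "c \<noteq> 0" "d \<noteq> 0" "X = smul c M ** smul d N"
      unfolding pcls_alt by blast
    then show "X \<in> pcls (M ** N)" unfolding pcls_alt
      by (auto simp: smul_mul_left smul_mul_right mult.commute intro!: exI[of _ "c * d"])
  next
    fix X assume "X \<in> pcls (M ** N)"
    then obtain c where "c \<noteq> 0" "X = smul c (M ** N)" unfolding pcls_alt by blast
    then have "X = smul c M ** N" by (simp add: smul_mul_left)
    moreover have "smul c M \<in> pcls M" unfolding pcls_alt using \<open>c \<noteq> 0\<close> by blast
    moreover have "N \<in> pcls N" unfolding pcls_alt by (rule CollectI, rule exI[of _ 1]) simp
    ultimately show "X \<in> {A ** B | A B. A \<in> pcls M \<and> B \<in> pcls N}" by blast
  qed
  then show ?thesis by (simp add: PGL_def)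
qed

lemma PGL_carrier: "carrier PGL = {pcls M | M. invertible M}"
  by (simp add: PGL_def)

lemma PGL_one: "\<one>\<^bsub>PGL\<^esub> = pcls (mat 1)"
  by (simp add: PGL_def)

lemma invertible_I: "invertible (mat 1 :: complex^'n^'n)"
  unfolding invertible_def by (rule exI[of _ "mat 1"]) (simp only: matrix_mul_lid conj_absorb)

lemma group_PGL: "group (PGL :: (complex^'n::finite^'n) set monoid)"
proof (rule groupI)
  fix x y assume "x \<in> carrier (PGL :: (complex^'n::finite^'n) set monoid)" "y \<in> carrier (PGL :: (complex^'n::finite^'n) set monoid)"
  then show "x \<otimes>\<^bsub>PGL\<^esub> y \<in> carrier PGL"
    by (auto simp: PGL_carrier pcls_mult intro: invertible_mult)
next
  show "\<one>\<^bsub>PGL\<^esub> \<in> carrier (PGL :: (complex^'n::finite^'n) set monoid)"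
    by (auto simp: PGL_carrier PGL_one invertible_I)
next
  fix x y z assume "x \<in> carrier (PGL :: (complex^'n::finite^'n) set monoid)" "y \<in> carrier (PGL :: (complex^'n::finite^'n) set monoid)" "z \<in> carrier (PGL :: (complex^'n::finite^'n) set monoid)"
  then show "x \<otimes>\<^bsub>PGL\<^esub> y \<otimes>\<^bsub>PGL\<^esub> z = x \<otimes>\<^bsub>PGL\<^esub> (y \<otimes>\<^bsub>PGL\<^esub> z)"
    by (auto simp: PGL_carrier pcls_mult matrix_mul_assoc)
next
  fix x assume "x \<in> carrier (PGL :: (complex^'n::finite^'n) set monoid)"
  then show "\<one>\<^bsub>PGL\<^esub> \<otimes>\<^bsub>PGL\<^esub> x = x"
    by (auto simp: PGL_carrier PGL_one pcls_mult)
next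
  fix x assume "x \<in> carrier (PGL :: (complex^'n::finite^'n) set monoid)"
  then obtain M where M: "x = pcls M" "invertible M" by (auto simp: PGL_carrier)
  then show "\<exists>y\<in>carrier PGL. y \<otimes>\<^bsub>PGL\<^esub> x = \<one>\<^bsub>PGL\<^esub>"
    by (intro bexI[of _ "pcls (matrix_inv M)"])
       (auto simp: PGL_carrier PGL_one pcls_mult matrix_inv_left invertible_matrix_inv)
qed

lemma PGL_inv: "invertible (M::complex^'n::finite^'n) \<Longrightarrow> inv\<^bsub>PGL\<^esub> (pcls M) = pcls (matrix_inv M)"
  apply (rule group.inv_equality[OF group_PGL])
  by (auto simp: PGL_carrier PGL_one pcls_mult matrix_inv_left invertible_matrix_inv)



lemma diag_nth: "diag_mat d $ k $ l = (if k = l then d k else 0)"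
  by (simp add: diag_mat_def)

lemma mul_diag_nth[simp]: "(M ** diag_mat d) $ k $ l = M $ k $ l * d l"
proof -
  have "\<And>m. M $ k $ m * diag_mat d $ m $ l = (if m = l then M $ k $ l * d l else 0)"
    by (simp add: diag_nth)
  then have "(M ** diag_mat d) $ k $ l = (\<Sum>m\<in>UNIV. if m = l then M $ k $ l * d l else 0)"
    unfolding matrix_matrix_mult_def by simp
  then show ?thesis by simp
qed

lemma diag_mul_nth[simp]: "(diag_mat d ** M) $ k $ l = d k * M $ k $ l"
proof -
  have "\<And>m. diag_mat d $ k $ m * M $ m $ l = (if m = k then d k * M $ k $ l else 0)"
    by (simp add: diag_nth)
  then have "(diag_mat d ** M) $ k $ l = (\<Sum>m\<in>UNIV. if m = k then d k * M $ k $ l else 0)"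
    unfolding matrix_matrix_mult_def by simp
  then show ?thesis by simp
qed

lemma diag_mul: "diag_mat a ** diag_mat b = diag_mat (\<lambda>i. a i * b i)"
  by (simp add: vec_eq_iff diag_nth)

lemma diag_smul_inj: "diag_mat a = smul c (diag_mat b) \<Longrightarrow> a i = c * b i"
  by (drule arg_cong[where f="\<lambda>M. M $ i $ i"]) (simp add: diag_nth)

lemma trace_diag: "trace (diag_mat d) = (\<Sum>i\<in>UNIV. d i)"
  by (simp add: trace_def diag_nth)

lemma trace_smul: "trace (smul c M) = c * trace M"
  by (simp add: trace_def sum_distrib_left)

lemma unconj: "invertible (G::complex^'n^'n) \<Longrightarrow> matrix_inv G ** (G ** X ** matrix_inv G) ** G = X"
  by (simp add: matrix_mul_assoc matrix_inv_left)
     (metis matrix_inv_left matrix_mul_assoc matrix_mul_lid matrix_mul_rid)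

lemma conj_back: "invertible (G::complex^'n^'n) \<Longrightarrow> G ** (matrix_inv G ** X ** G) ** matrix_inv G = X"
  by (metis matrix_inv_right matrix_mul_assoc matrix_mul_lid matrix_mul_rid)

lemma trace_conj: "invertible (G::complex^'n^'n) \<Longrightarrow> trace (G ** X ** matrix_inv G) = trace X"
  by (metis matrix_inv_left matrix_mul_assoc matrix_mul_lid trace_mul_sym)

lemma lift_eq:
  assumes G: "invertible (G::complex^'n^'n)"
    and "pcls (G ** D1 ** matrix_inv G) = pcls (G ** D2 ** matrix_inv G)"
  shows "\<exists>c. c \<noteq> 0 \<and> D2 = smul c D1"
proof -
  obtain c where c: "c \<noteq> 0" "G ** D2 ** matrix_inv G = smul c (G ** D1 ** matrix_inv G)"
    using assms(2) pcls_eq by blast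
  have "D2 = matrix_inv G ** (G ** D2 ** matrix_inv G) ** G" using unconj[OF G] by simp
  also have "\<dots> = smul c (matrix_inv G ** (G ** D1 ** matrix_inv G) ** G)"
    by (simp add: c smul_mul_left smul_mul_right)
  also have "\<dots> = smul c D1" using unconj[OF G] by simp
  finally show ?thesis using c by blast
qed

lemma istop: "istopology (\<lambda>U. U \<subseteq> carrier PGL \<and> open {M::complex^'n::finite^'n. invertible M \<and> pcls M \<in> U})"
  unfolding istopology_def
proof (rule conjI; intro allI impI)
  fix S T :: "(complex^'n^'n) set set"
  assume "S \<subseteq> carrier PGL \<and> open {M. invertible M \<and> pcls M \<in> S}"
     "T \<subseteq> carrier PGL \<and> open {M. invertible M \<and> pcls M \<in> T}"
  moreover have "{M. invertible M \<and> pcls M \<in> S \<inter> T} = {M. invertible M \<and> pcls M \<in> S} \<inter> {M. invertible M \<and> pcls M \<in> T}" by auto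
  ultimately show "S \<inter> T \<subseteq> carrier PGL \<and> open {M. invertible M \<and> pcls M \<in> S \<inter> T}" by auto
next
  fix K :: "(complex^'n^'n) set set set"
  assume K: "\<forall>S\<in>K. S \<subseteq> carrier PGL \<and> open {M. invertible M \<and> pcls M \<in> S}"
  have "{M. invertible M \<and> pcls M \<in> \<Union>K} = (\<Union>S\<in>K. {M. invertible M \<and> pcls M \<in> S})" by auto
  then show "\<Union>K \<subseteq> carrier PGL \<and> open {M. invertible M \<and> pcls M \<in> \<Union>K}"
    using K by auto
qed

lemma openin_PGL: "openin PGL_top U \<longleftrightarrow> U \<subseteq> carrier PGL \<and> open {M::complex^'n::finite^'n. invertible M \<and> pcls M \<in> U}"
  unfolding PGL_top_def topology_inverse'[OF istop] by simp

lemma open_invertible: "open {M::complex^'n::finite^'n. invertible M}"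
proof -
  have "continuous_on UNIV (det :: complex^'n^'n \<Rightarrow> complex)"
    unfolding det_def by (intro continuous_intros)
  then have "open {M::complex^'n^'n. det M \<noteq> (\<lambda>_. 0) M}"
    by (intro open_Collect_neq) (auto intro: continuous_intros)
  then show ?thesis by (simp add: invertible_det_nz)
qed

lemma cont_mm_right: "continuous_on UNIV (\<lambda>M::complex^'n::finite^'n. M ** X)"
  unfolding matrix_matrix_mult_def by (intro continuous_intros)

lemma cont_mm_left: "continuous_on UNIV (\<lambda>M::complex^'n::finite^'n. smul c (X ** M))"
  unfolding matrix_matrix_mult_def smul_def by (intro continuous_intros)

lemma open_neq: "open {M::complex^'n::finite^'n. M ** X \<noteq> smul c (X ** M)}"
  by (intro open_Collect_neq cont_mm_right cont_mm_left)

lemma pre_pcls: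
  assumes inv: "\<And>M c. P M \<Longrightarrow> c \<noteq> 0 \<Longrightarrow> P (smul c M)"
  shows "{M. invertible M \<and> pcls M \<in> {pcls N | N. invertible N \<and> P N}} = {M. invertible M \<and> P M}"
proof safe
  fix M N assume "invertible M" "pcls M = pcls N" "invertible N" "P N"
  then obtain c where "c \<noteq> 0" "M = smul c N" using pcls_eq by metis
  then show "P M" using inv \<open>P N\<close> by simp
qed auto



lemma lifted_mult:
  assumes G: "invertible (G::complex^'n::finite^'n)"
  shows "pcls (G ** diag_mat a ** matrix_inv G) \<otimes>\<^bsub>PGL\<^esub> pcls (G ** diag_mat b ** matrix_inv G)
       = pcls (G ** diag_mat (\<lambda>i. a i * b i) ** matrix_inv G)"
proof -
  have "G ** diag_mat a ** matrix_inv G ** (G ** diag_mat b ** matrix_inv G)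
      = G ** diag_mat a ** (matrix_inv G ** G) ** diag_mat b ** matrix_inv G"
    by (simp add: matrix_mul_assoc)
  also have "\<dots> = G ** (diag_mat a ** diag_mat b) ** matrix_inv G"
    by (simp add: matrix_inv_left[OF G] matrix_mul_assoc)
  also have "\<dots> = G ** diag_mat (\<lambda>i. a i * b i) ** matrix_inv G"
    by (simp add: diag_mul)
  finally show ?thesis by (simp add: pcls_mult)
qed

locale lsetting =
  fixes A :: "(complex^'n::finite^'n) set set" and G :: "complex^'n^'n"
  assumes sub: "subgroup A PGL" and finA: "finite A" and G: "invertible G"
    and lift: "\<And>x. x \<in> A \<Longrightarrow> \<exists>d. (\<forall>i. d i \<noteq> 0) \<and> x = pcls (G ** diag_mat d ** matrix_inv G)"
begin

definition dl where "dl x = (SOME d. (\<forall>i. d i \<noteq> 0) \<and> x = pcls (G ** diag_mat d ** matrix_inv G))"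

definition chi where "chi k x = dl x k / dl x undefined"

lemma dl: assumes "x \<in> A" shows "(\<forall>i. dl x i \<noteq> 0) \<and> x = pcls (G ** diag_mat (dl x) ** matrix_inv G)"
  unfolding dl_def using someI_ex[OF lift[OF assms]] .

lemma dl_nz: "x \<in> A \<Longrightarrow> dl x i \<noteq> 0" using dl by blast

lemma chi_nz: "x \<in> A \<Longrightarrow> chi k x \<noteq> 0" by (simp add: chi_def dl_nz)

lemma AinG: "x \<in> A \<Longrightarrow> x \<in> carrier PGL" using subgroup.subset[OF sub] by blast

lemma dl_mult:
  assumes x: "x \<in> A" and y: "y \<in> A"
  shows "\<exists>c. c \<noteq> 0 \<and> (\<forall>i. dl (x \<otimes>\<^bsub>PGL\<^esub> y) i = c * (dl x i * dl y i))"
proof -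
  have xy: "x \<otimes>\<^bsub>PGL\<^esub> y \<in> A" by (rule subgroup.m_closed[OF sub x y])
  have ex: "x = pcls (G ** diag_mat (dl x) ** matrix_inv G)" using dl[OF x] by blast
  have ey: "y = pcls (G ** diag_mat (dl y) ** matrix_inv G)" using dl[OF y] by blast
  have "pcls (G ** diag_mat (\<lambda>i. dl x i * dl y i) ** matrix_inv G) = x \<otimes>\<^bsub>PGL\<^esub> y"
    using arg_cong2[OF ex ey, of "(\<otimes>\<^bsub>PGL\<^esub>)"] lifted_mult[OF G, of "dl x" "dl y"] by simp
  also have "\<dots> = pcls (G ** diag_mat (dl (x \<otimes>\<^bsub>PGL\<^esub> y)) ** matrix_inv G)"
    by (rule conjunct2[OF dl[OF xy]])
  finally have "\<exists>c. c \<noteq> 0 \<and> diag_mat (dl (x \<otimes>\<^bsub>PGL\<^esub> y)) = smul c (diag_mat (\<lambda>i. dl x i * dl y i))"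
    by (rule lift_eq[OF G])
  then obtain c where "c \<noteq> 0" "diag_mat (dl (x \<otimes>\<^bsub>PGL\<^esub> y)) = smul c (diag_mat (\<lambda>i. dl x i * dl y i))"
    by blast
  then show ?thesis using diag_smul_inj[of "dl (x \<otimes>\<^bsub>PGL\<^esub> y)"] by blast
qed

lemma chi_mult: "x \<in> A \<Longrightarrow> y \<in> A \<Longrightarrow> chi k (x \<otimes>\<^bsub>PGL\<^esub> y) = chi k x * chi k y"
proof -
  assume x: "x \<in> A" and y: "y \<in> A"
  then obtain c where c: "c \<noteq> 0" "\<And>i. dl (x \<otimes>\<^bsub>PGL\<^esub> y) i = c * (dl x i * dl y i)"
    using dl_mult by blast
  have "chi k (x \<otimes>\<^bsub>PGL\<^esub> y) = (c * (dl x k * dl y k)) / (c * (dl x undefined * dl y undefined))"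
    unfolding chi_def by (simp only: c(2))
  also have "\<dots> = chi k x * chi k y"
    using c(1) unfolding chi_def by (simp add: times_divide_times_eq)
  finally show ?thesis .
qed

lemma oneA: "\<one>\<^bsub>PGL\<^esub> \<in> A" by (rule subgroup.one_closed[OF sub])

lemma oo: "\<one>\<^bsub>PGL\<^esub> \<otimes>\<^bsub>PGL\<^esub> \<one>\<^bsub>PGL\<^esub> = \<one>\<^bsub>PGL\<^esub>"
  using monoid.l_one[OF group.is_monoid[OF group_PGL] monoid.one_closed[OF group.is_monoid[OF group_PGL]]] .

lemma chi_one: "chi k \<one>\<^bsub>PGL\<^esub> = 1"
proof -
  have "chi k \<one>\<^bsub>PGL\<^esub> = chi k \<one>\<^bsub>PGL\<^esub> * chi k \<one>\<^bsub>PGL\<^esub>"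
    using chi_mult[OF oneA oneA, of k] unfolding oo .
  then show ?thesis using chi_nz[OF oneA, of k] by simp
qed

lemma chi_undef: "x \<in> A \<Longrightarrow> chi undefined x = 1"
  by (simp add: chi_def dl_nz)

lemma orth:
  assumes hom: "\<And>x y. x \<in> A \<Longrightarrow> y \<in> A \<Longrightarrow> \<phi> (x \<otimes>\<^bsub>PGL\<^esub> y) = \<phi> x * \<phi> y"
    and y: "y \<in> A" and ny: "\<phi> y \<noteq> 1"
  shows "(\<Sum>x\<in>A. \<phi> x) = (0::complex)"
proof -
  interpret Gp: group PGL by (rule group_PGL)
  have yc: "y \<in> carrier PGL" using AinG y by blast
  have iy: "inv\<^bsub>PGL\<^esub> y \<in> A" by (rule subgroup.m_inv_closed[OF sub y])
  have bij: "bij_betw (\<lambda>x. y \<otimes>\<^bsub>PGL\<^esub> x) A A"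
  proof (rule bij_betw_byWitness[where f'="\<lambda>x. inv\<^bsub>PGL\<^esub> y \<otimes>\<^bsub>PGL\<^esub> x"])
    show "\<forall>a\<in>A. inv\<^bsub>PGL\<^esub> y \<otimes>\<^bsub>PGL\<^esub> (y \<otimes>\<^bsub>PGL\<^esub> a) = a"
    proof
      fix a assume "a \<in> A"
      then have ac: "a \<in> carrier PGL" by (rule AinG)
      show "inv\<^bsub>PGL\<^esub> y \<otimes>\<^bsub>PGL\<^esub> (y \<otimes>\<^bsub>PGL\<^esub> a) = a"
        using Gp.m_assoc[OF Gp.inv_closed[OF yc] yc ac] Gp.l_inv[OF yc] Gp.l_one[OF ac] by simp
    qed
    show "\<forall>a\<in>A. y \<otimes>\<^bsub>PGL\<^esub> (inv\<^bsub>PGL\<^esub> y \<otimes>\<^bsub>PGL\<^esub> a) = a"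
    proof
      fix a assume "a \<in> A"
      then have ac: "a \<in> carrier PGL" by (rule AinG)
      show "y \<otimes>\<^bsub>PGL\<^esub> (inv\<^bsub>PGL\<^esub> y \<otimes>\<^bsub>PGL\<^esub> a) = a"
        using Gp.m_assoc[OF yc Gp.inv_closed[OF yc] ac] Gp.r_inv[OF yc] Gp.l_one[OF ac] by simp
    qed
    show "(\<lambda>x. y \<otimes>\<^bsub>PGL\<^esub> x) ` A \<subseteq> A" using subgroup.m_closed[OF sub y] by blast
    show "(\<lambda>x. inv\<^bsub>PGL\<^esub> y \<otimes>\<^bsub>PGL\<^esub> x) ` A \<subseteq> A" using subgroup.m_closed[OF sub iy] by blast
  qed
  have "(\<Sum>x\<in>A. \<phi> x) = (\<Sum>x\<in>A. \<phi> (y \<otimes>\<^bsub>PGL\<^esub> x))"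
    using sum.reindex_bij_betw[OF bij, of \<phi>] by simp
  also have "\<dots> = \<phi> y * (\<Sum>x\<in>A. \<phi> x)"
    by (simp add: hom y sum_distrib_left)
  finally have "(1 - \<phi> y) * (\<Sum>x\<in>A. \<phi> x) = 0" by (simp add: algebra_simps)
  then show ?thesis using ny by simp
qed

lemma count:
  assumes H: "\<And>x. x \<in> A \<Longrightarrow> x \<noteq> \<one>\<^bsub>PGL\<^esub> \<Longrightarrow> (\<Sum>k\<in>UNIV. chi k x) = 0"
    and hom: "\<And>x y. x \<in> A \<Longrightarrow> y \<in> A \<Longrightarrow> \<psi> (x \<otimes>\<^bsub>PGL\<^esub> y) = \<psi> x * \<psi> y"
    and nz: "\<And>x. x \<in> A \<Longrightarrow> \<psi> x \<noteq> 0"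
  shows "card {k. \<forall>x\<in>A. chi k x = \<psi> x} * card A = CARD('n)"
proof -
  have psi1: "\<psi> \<one>\<^bsub>PGL\<^esub> = 1"
  proof -
    have "\<psi> \<one>\<^bsub>PGL\<^esub> = \<psi> \<one>\<^bsub>PGL\<^esub> * \<psi> \<one>\<^bsub>PGL\<^esub>"
      using hom[OF oneA oneA] unfolding oo .
    then show ?thesis using nz[OF oneA] by simp
  qed
  have inner: "(\<Sum>x\<in>A. chi k x / \<psi> x) = (if \<forall>x\<in>A. chi k x = \<psi> x then of_nat (card A) else 0)" for k
  proof (cases "\<forall>x\<in>A. chi k x = \<psi> x")
    case True
    then have "(\<Sum>x\<in>A. chi k x / \<psi> x) = (\<Sum>x\<in>A. 1)" using nz by (intro sum.cong) auto
    then show ?thesis using True by simp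
  next
    case False
    then obtain y where y: "y \<in> A" "chi k y \<noteq> \<psi> y" by blast
    have s0: "(\<Sum>x\<in>A. chi k x / \<psi> x) = 0"
    proof (rule orth[where y=y])
      show "chi k (x \<otimes>\<^bsub>PGL\<^esub> z) / \<psi> (x \<otimes>\<^bsub>PGL\<^esub> z) = chi k x / \<psi> x * (chi k z / \<psi> z)"
        if "x \<in> A" "z \<in> A" for x z using that by (simp add: chi_mult hom)
      show "y \<in> A" by fact
      show "chi k y / \<psi> y \<noteq> 1" using y nz by simp
    qed
    have i0: "(if \<forall>x\<in>A. chi k x = \<psi> x then of_nat (card A) else 0) = (0::complex)"
      using False by (rule if_not_P)
    show ?thesis using s0 i0 by (rule trans[OF _ sym])
  qed
  have "(\<Sum>k\<in>UNIV. \<Sum>x\<in>A. chi k x / \<psi> x) = (\<Sum>k\<in>{k. \<forall>x\<in>A. chi k x = \<psi> x}. of_nat (card A))"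
    unfolding inner by (rule sum.inter_filter[symmetric, where A=UNIV, simplified]) simp
  also have "\<dots> = of_nat (card {k. \<forall>x\<in>A. chi k x = \<psi> x} * card A)" by simp
  finally have e1: "(\<Sum>k\<in>UNIV. \<Sum>x\<in>A. chi k x / \<psi> x) = of_nat (card {k. \<forall>x\<in>A. chi k x = \<psi> x} * card A)" .
  have "(\<Sum>k\<in>UNIV. \<Sum>x\<in>A. chi k x / \<psi> x) = (\<Sum>x\<in>A. (\<Sum>k\<in>UNIV. chi k x) / \<psi> x)"
    by (subst sum.swap) (simp add: sum_divide_distrib)
  also have "\<dots> = (\<Sum>x\<in>A. if x = \<one>\<^bsub>PGL\<^esub> then of_nat CARD('n) else 0)"
    by (rule sum.cong) (auto simp: H chi_one psi1)
  also have "\<dots> = of_nat CARD('n)" using oneA finA by simp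
  finally have "of_nat (card {k. \<forall>x\<in>A. chi k x = \<psi> x} * card A) = (of_nat CARD('n) :: complex)"
    using e1 by simp
  then show ?thesis by (simp only: of_nat_eq_iff)
qed

end


lemma conj_mult:
  assumes G: "invertible (G::complex^'n::finite^'n)"
  shows "pcls (G ** X ** matrix_inv G) \<otimes>\<^bsub>PGL\<^esub> pcls (G ** Y ** matrix_inv G)
       = pcls (G ** (X ** Y) ** matrix_inv G)"
proof -
  have "G ** X ** matrix_inv G ** (G ** Y ** matrix_inv G)
      = G ** X ** (matrix_inv G ** G) ** Y ** matrix_inv G"
    by (simp add: matrix_mul_assoc)
  also have "\<dots> = G ** (X ** Y) ** matrix_inv G"
    by (simp add: matrix_inv_left[OF G] matrix_mul_assoc)
  finally show ?thesis by (simp add: pcls_mult)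
qed

lemma pcls_smul: "c \<noteq> 0 \<Longrightarrow> pcls (smul c M) = pcls M"
  using pcls_eq[of "smul c M" M] by (intro iffD2[OF pcls_eq[of "smul c M" M]] exI[of _ "inverse c"]) simp

lemma conj_smul: "(G::complex^'n::finite^'n) ** smul c X ** H = smul c (G ** X ** H)"
  by (simp add: smul_mul_left smul_mul_right)

lemma perm_inv:
  fixes \<sigma> :: "'n::finite \<Rightarrow> 'n"
  assumes "inj \<sigma>"
  shows "invertible ((\<chi> a b. if b = \<sigma> a then 1 else 0) :: complex^'n^'n)"
proof -
  let ?P = "(\<chi> a b. if b = \<sigma> a then 1 else 0) :: complex^'n^'n"
  have "?P ** transpose ?P = mat 1"
  proof -
    have "\<And>a b c. ?P $ a $ c * transpose ?P $ c $ b = (if c = \<sigma> a then (if a = b then 1 else 0) else 0)"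
      using assms by (auto simp: transpose_def inj_eq)
    then show ?thesis
      by (simp add: matrix_matrix_mult_def vec_eq_iff mat_def)
  qed
  then show ?thesis using invertible_right_inverse by blast
qed

context lsetting
begin

lemma perm_exists:
  assumes H: "\<And>x. x \<in> A \<Longrightarrow> x \<noteq> \<one>\<^bsub>PGL\<^esub> \<Longrightarrow> (\<Sum>k\<in>UNIV. chi k x) = 0"
  shows "\<exists>\<sigma>. inj \<sigma> \<and> (\<forall>k. \<forall>x\<in>A. chi (\<sigma> k) x = chi j x * chi k x)"
proof -
  define S where "S k = {l. \<forall>x\<in>A. chi l x = chi k x}" for k
  define T where "T k = {l. \<forall>x\<in>A. chi l x = chi j x * chi k x}" for k
  have cA: "card A > 0" using finA oneA card_gt_0_iff by blast
  have cS: "card (S k) * card A = CARD('n)" for k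
    unfolding S_def by (rule count[OF H]) (auto simp: chi_mult chi_nz)
  have cT: "card (T k) * card A = CARD('n)" for k
    unfolding T_def by (rule count[OF H]) (auto simp: chi_mult chi_nz)
  have ST: "card (S k) = card (T k)" for k
    using cS[of k] cT[of k] cA by (metis mult_right_cancel not_gr0)
  define f where "f k = (SOME h. bij_betw h (S k) (T k))" for k
  have fb: "bij_betw (f k) (S k) (T k)" for k
  proof -
    have ex: "\<exists>h. bij_betw h (S k) (T k)" by (rule finite_same_card_bij) (simp_all add: ST)
    show ?thesis unfolding f_def by (rule someI_ex[OF ex])
  qed
  define \<sigma> where "\<sigma> k = f k k" for k
  have kS: "k \<in> S k" for k by (simp add: S_def)
  have sT: "\<sigma> k \<in> T k" for k
    using fb[of k] kS[of k] unfolding \<sigma>_def bij_betw_def by blast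
  have "inj \<sigma>"
  proof (rule injI)
    fix k l assume e: "\<sigma> k = \<sigma> l"
    have "\<forall>x\<in>A. chi k x = chi l x"
    proof
      fix x assume x: "x \<in> A"
      have "chi j x * chi k x = chi j x * chi l x"
        using sT[of k] sT[of l] x e unfolding T_def by auto
      then show "chi k x = chi l x" using chi_nz[OF x, of j] by simp
    qed
    then have "S k = S l" "T k = T l" unfolding S_def T_def by auto
    then have "f k = f l" unfolding f_def by simp
    then have "f k k = f k l" using e unfolding \<sigma>_def by simp
    moreover have "l \<in> S k" using \<open>S k = S l\<close> kS by simp
    ultimately show "k = l" using fb[of k] kS[of k] unfolding bij_betw_def inj_on_def by blast
  qed
  moreover have "\<forall>k. \<forall>x\<in>A. chi (\<sigma> k) x = chi j x * chi k x"
    using sT unfolding T_def by blast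
  ultimately show ?thesis by blast
qed

end


context lsetting
begin

lemma disconnected:
  assumes H: "\<And>x. x \<in> A \<Longrightarrow> x \<noteq> \<one>\<^bsub>PGL\<^esub> \<Longrightarrow> (\<Sum>k\<in>UNIV. chi k x) = 0"
    and x1: "x1 \<in> A" and x1n: "x1 \<noteq> \<one>\<^bsub>PGL\<^esub>"
  shows "\<not> connectedin PGL_top (pgl_centralizer A)"
proof -
  interpret Gp: group PGL by (rule group_PGL)
  define Gi where "Gi = matrix_inv G"
  have Gi: "invertible Gi" unfolding Gi_def by (rule invertible_matrix_inv[OF G])
  have GiG: "Gi ** G = mat 1" unfolding Gi_def by (rule matrix_inv_left[OF G])
  have GGi: "G ** Gi = mat 1" unfolding Gi_def by (rule matrix_inv_right[OF G])
  define C where "C = pgl_centralizer A"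
  obtain j where j: "chi j x1 \<noteq> 1"
  proof -
    have s: "(\<Sum>k\<in>UNIV. chi k x1) = 0" by (rule H[OF x1 x1n])
    show ?thesis
    proof (cases "\<forall>k. chi k x1 = 1")
      case True
      then have "(\<Sum>k\<in>UNIV. chi k x1) = of_nat CARD('n)" by simp
      with s show ?thesis by simp
    next
      case False
      then show ?thesis using that by blast
    qed
  qed
  obtain \<sigma> where \<sigma>: "inj \<sigma>" "\<And>k x. x \<in> A \<Longrightarrow> chi (\<sigma> k) x = chi j x * chi k x"
    using perm_exists[OF H, of j] by blast
  define P where "P = ((\<chi> a b. if b = \<sigma> a then 1 else 0) :: complex^'n^'n)"
  have Pinv: "invertible P" unfolding P_def by (rule perm_inv[OF \<sigma>(1)])
  have Pcomm: "P ** diag_mat (dl y) = smul (chi j y) (diag_mat (dl y) ** P)" if y: "y \<in> A" for y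
  proof -
    have e: "dl y (\<sigma> a) = chi j y * dl y a" for a
    proof -
      have "dl y (\<sigma> a) / dl y undefined = chi j y * (dl y a / dl y undefined)"
        using \<sigma>(2)[OF y, of a] unfolding chi_def[of "\<sigma> a"] chi_def[of a] by simp
      then show ?thesis using dl_nz[OF y, of undefined] by (simp add: field_simps)
    qed
    show ?thesis by (simp add: vec_eq_iff P_def e)
  qed
  define P' where "P' = G ** P ** Gi"
  have P'inv: "invertible P'" unfolding P'_def using G Pinv Gi by (simp add: invertible_mult)
  have P'C: "pcls P' \<in> C"
    unfolding C_def pgl_centralizer_def
  proof (intro CollectI conjI ballI)
    show "pcls P' \<in> carrier PGL" using P'inv by (auto simp: PGL_carrier)
    fix y assume y: "y \<in> A"
    have ey: "pcls (G ** diag_mat (dl y) ** Gi) = y" using dl[OF y] unfolding Gi_def by simp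
    have cnz: "chi j y \<noteq> 0" by (rule chi_nz[OF y])
    have "pcls P' \<otimes>\<^bsub>PGL\<^esub> pcls (G ** diag_mat (dl y) ** Gi) = pcls (G ** (P ** diag_mat (dl y)) ** Gi)"
      unfolding P'_def Gi_def by (rule conj_mult[OF G])
    also have "\<dots> = pcls (smul (chi j y) (G ** (diag_mat (dl y) ** P) ** Gi))"
      by (simp add: Pcomm[OF y] conj_smul)
    also have "\<dots> = pcls (G ** (diag_mat (dl y) ** P) ** Gi)" by (rule pcls_smul[OF cnz])
    also have "\<dots> = pcls (G ** diag_mat (dl y) ** Gi) \<otimes>\<^bsub>PGL\<^esub> pcls P'"
      unfolding P'_def Gi_def by (rule conj_mult[OF G, symmetric])
    finally show "pcls P' \<otimes>\<^bsub>PGL\<^esub> y = y \<otimes>\<^bsub>PGL\<^esub> pcls P'" by (simp only: ey)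
  qed
  define d1 where "d1 = dl x1"
  define D1 where "D1 = diag_mat d1"
  define X where "X = G ** D1 ** Gi"
  have ex1: "x1 = pcls X" using dl[OF x1] unfolding X_def D1_def d1_def Gi_def by blast
  have d1nz: "d1 i \<noteq> 0" for i unfolding d1_def by (rule dl_nz[OF x1])
  have Xinv: "invertible X"
  proof -
    obtain M where M: "x1 = pcls M" "invertible M" using AinG[OF x1] by (auto simp: PGL_carrier)
    then obtain c where "c \<noteq> 0" "X = smul c M" using ex1 pcls_eq by metis
    then show ?thesis using M(2) invertible_smul by blast
  qed
  have GiG': "Gi ** (G ** Z) = Z" for Z by (simp add: matrix_mul_assoc GiG)
  have XG: "X ** G = G ** D1" unfolding X_def by (simp add: matrix_mul_assoc[symmetric] GiG)
  have GiX: "Gi ** X = D1 ** Gi" unfolding X_def by (simp add: matrix_mul_assoc[symmetric] GiG')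
  define Mu where "Mu = (\<lambda>(k, l). d1 l / d1 k) ` UNIV - {1}"
  have finMu: "finite Mu" unfolding Mu_def by simp
  define PP1 where "PP1 M = (\<forall>c\<in>Mu. M ** X \<noteq> smul c (X ** M))" for M
  define PP2 where "PP2 M = (M ** X \<noteq> smul 1 (X ** M))" for M
  define E1 where "E1 = {pcls N | N. invertible N \<and> PP1 N}"
  define E2 where "E2 = {pcls N | N. invertible N \<and> PP2 N}"
  have inv1: "PP1 (smul c M)" if "PP1 M" "c \<noteq> 0" for M c
    unfolding PP1_def
  proof
    fix ca assume ca: "ca \<in> Mu"
    show "smul c M ** X \<noteq> smul ca (X ** smul c M)"
    proof
      assume "smul c M ** X = smul ca (X ** smul c M)"
      then have "smul c (M ** X) = smul c (smul ca (X ** M))"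
        by (simp add: smul_mul_left smul_mul_right mult.commute)
      then have "M ** X = smul ca (X ** M)" using smul_cancel[OF that(2)] by blast
      then show False using that(1) ca unfolding PP1_def by blast
    qed
  qed
  have inv2: "PP2 (smul c M)" if "PP2 M" "c \<noteq> 0" for M c
    using that unfolding PP2_def
    by (auto simp: smul_mul_left smul_mul_right smul_cancel)
  have pre1: "{M. invertible M \<and> pcls M \<in> E1} = {M. invertible M \<and> PP1 M}"
    unfolding E1_def by (rule pre_pcls[where P=PP1, OF inv1])
  have pre2: "{M. invertible M \<and> pcls M \<in> E2} = {M. invertible M \<and> PP2 M}"
    unfolding E2_def by (rule pre_pcls[where P=PP2, OF inv2])
  have mem1: "pcls M \<in> E1 \<longleftrightarrow> PP1 M" if "invertible M" for M
    using pre1 that by blast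
  have mem2: "pcls M \<in> E2 \<longleftrightarrow> PP2 M" if "invertible M" for M
    using pre2 that by blast
  have open1: "openin PGL_top E1"
  proof -
    have "{M. invertible M \<and> PP1 M} = {M. invertible M} \<inter> (\<Inter>c\<in>Mu. {M. M ** X \<noteq> smul c (X ** M)})"
      unfolding PP1_def by auto
    moreover have "open ({M::complex^'n^'n. invertible M} \<inter> (\<Inter>c\<in>Mu. {M. M ** X \<noteq> smul c (X ** M)}))"
      by (intro open_Int open_invertible open_INT finMu ballI open_neq)
    ultimately show ?thesis unfolding openin_PGL pre1 by (auto simp: E1_def PGL_carrier)
  qed
  have open2: "openin PGL_top E2"
  proof -
    have "{M. invertible M \<and> PP2 M} = {M. invertible M} \<inter> {M. M ** X \<noteq> smul 1 (X ** M)}"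
      unfolding PP2_def by auto
    moreover have "open ({M::complex^'n^'n. invertible M} \<inter> {M. M ** X \<noteq> smul 1 (X ** M)})"
      by (intro open_Int open_invertible open_neq)
    ultimately show ?thesis unfolding openin_PGL pre2 by (auto simp: E2_def PGL_carrier)
  qed
  have cent: "\<exists>c. c \<noteq> 0 \<and> M ** X = smul c (X ** M)" if M: "invertible M" "pcls M \<in> C" for M
  proof -
    have "pcls M \<otimes>\<^bsub>PGL\<^esub> x1 = x1 \<otimes>\<^bsub>PGL\<^esub> pcls M"
      using M(2) x1 unfolding C_def pgl_centralizer_def by blast
    then have "pcls (M ** X) = pcls (X ** M)" unfolding ex1 pcls_mult .
    then obtain c where c: "c \<noteq> 0" "X ** M = smul c (M ** X)" using pcls_eq by blast
    then have "M ** X = smul (inverse c) (X ** M)" by simp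
    then show ?thesis using c(1) by (intro exI[of _ "inverse c"]) simp
  qed
  have mu: "c \<in> Mu" if M: "invertible M" "M ** X = smul c (X ** M)" "c \<noteq> 1" for M c
  proof -
    define M' where "M' = Gi ** M ** G"
    have M'inv: "invertible M'" unfolding M'_def using Gi M(1) G by (simp add: invertible_mult)
    have "M' ** D1 = Gi ** (M ** (G ** D1))" by (simp add: M'_def matrix_mul_assoc)
    also have "\<dots> = Gi ** ((M ** X) ** G)" by (simp add: XG[symmetric] matrix_mul_assoc)
    also have "\<dots> = smul c (Gi ** (X ** M) ** G)" by (simp add: M(2) smul_mul_left smul_mul_right matrix_mul_assoc)
    also have "\<dots> = smul c ((Gi ** X) ** M ** G)" by (simp add: matrix_mul_assoc)
    also have "\<dots> = smul c (D1 ** M')" by (simp add: GiX M'_def matrix_mul_assoc)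
    finally have eq: "M' ** D1 = smul c (D1 ** M')" .
    have "M' \<noteq> 0" by (rule invertible_nz[OF M'inv])
    then obtain a b where ab: "M' $ a $ b \<noteq> 0" by (metis vec_eq_iff zero_index)
    have "M' $ a $ b * d1 b = c * (d1 a * M' $ a $ b)"
      using arg_cong[OF eq, of "\<lambda>Z. Z $ a $ b"] by (simp add: D1_def)
    then have "d1 b = c * d1 a" using ab by (simp add: algebra_simps)
    then have "c = d1 b / d1 a" using d1nz[of a] by (simp add: field_simps)
    then show ?thesis unfolding Mu_def using M(3) by auto
  qed
  have XMnz: "X ** M \<noteq> 0" if "invertible M" for M :: "complex^'n^'n"
    using invertible_nz invertible_mult[OF Xinv that] by blast
  have Csub: "C \<subseteq> carrier PGL" unfolding C_def pgl_centralizer_def by blast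
  have cover: "C \<subseteq> E1 \<union> E2"
  proof
    fix g assume g: "g \<in> C"
    then obtain M where M: "g = pcls M" "invertible M" using Csub by (auto simp: PGL_carrier)
    obtain c where c: "c \<noteq> 0" "M ** X = smul c (X ** M)" using cent M g by blast
    show "g \<in> E1 \<union> E2"
    proof (cases "c = 1")
      case True
      have "PP1 M" unfolding PP1_def
      proof
        fix c' assume c': "c' \<in> Mu"
        show "M ** X \<noteq> smul c' (X ** M)"
        proof
          assume "M ** X = smul c' (X ** M)"
          then have "smul c' (X ** M) = X ** M" using c True by simp
          then have "c' = 1" using smul_eq_self XMnz[OF M(2)] by blast
          then show False using c' unfolding Mu_def by blast
        qed
      qed
      then show ?thesis using M mem1 by blast
    next
      case False
      have "PP2 M" unfolding PP2_def
      proof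
        assume "M ** X = smul 1 (X ** M)"
        then have "smul c (X ** M) = X ** M" using c by simp
        then show False using smul_eq_self XMnz[OF M(2)] False by blast
      qed
      then show ?thesis using M mem2 by blast
    qed
  qed
  have disj: "E1 \<inter> E2 \<inter> C = {}"
  proof (rule ccontr)
    assume "E1 \<inter> E2 \<inter> C \<noteq> {}"
    then obtain g where g: "g \<in> E1" "g \<in> E2" "g \<in> C" by blast
    then obtain M where M: "g = pcls M" "invertible M" using Csub by (auto simp: PGL_carrier)
    have p1: "PP1 M" using g(1) M mem1 by blast
    have p2: "PP2 M" using g(2) M mem2 by blast
    obtain c where c: "c \<noteq> 0" "M ** X = smul c (X ** M)" using cent M g(3) by blast
    have "c \<noteq> 1" using p2 c unfolding PP2_def by auto
    then have "c \<in> Mu" using mu M(2) c(2) by blast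
    then show False using p1 c(2) unfolding PP1_def by blast
  qed
  have ne1: "E1 \<inter> C \<noteq> {}"
  proof -
    have oneC: "pcls (mat 1) \<in> C"
      unfolding C_def pgl_centralizer_def PGL_one[symmetric]
      using AinG by (auto simp: Gp.l_one Gp.r_one)
    have "PP1 (mat 1)" unfolding PP1_def
    proof
      fix c' assume c': "c' \<in> Mu"
      show "mat 1 ** X \<noteq> smul c' (X ** mat 1)"
      proof
        assume "mat 1 ** X = smul c' (X ** mat 1)"
        then have "smul c' X = X" by simp
        then have "c' = 1" using smul_eq_self invertible_nz[OF Xinv] by blast
        then show False using c' unfolding Mu_def by blast
      qed
    qed
    then have "pcls (mat 1) \<in> E1" using mem1 invertible_I by blast
    then show ?thesis using oneC by blast
  qed
  have ne2: "E2 \<inter> C \<noteq> {}"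
  proof -
    have "P' ** X = smul (chi j x1) (X ** P')"
    proof -
      have "P' ** X = G ** (P ** D1) ** Gi"
        unfolding P'_def X_def by (simp add: matrix_mul_assoc[symmetric] GiG')
      also have "\<dots> = smul (chi j x1) (G ** (D1 ** P) ** Gi)"
        unfolding D1_def d1_def by (simp add: Pcomm[OF x1] conj_smul)
      also have "G ** (D1 ** P) ** Gi = X ** P'"
        unfolding P'_def X_def by (simp add: matrix_mul_assoc[symmetric] GiG')
      finally show ?thesis .
    qed
    then have "PP2 P'" unfolding PP2_def
      using smul_eq_self XMnz[OF P'inv] j by auto
    then have "pcls P' \<in> E2" using mem2 P'inv by blast
    then show ?thesis using P'C by blast
  qed
  show ?thesis
    unfolding connectedin C_def[symmetric]
    using open1 open2 cover disj ne1 ne2 by blast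
qed

end


lemma alpha_sum:
  fixes p :: nat
  assumes p2: "p \<ge> 2"
  shows "(\<Sum>j<p. exp (2 * of_real pi * \<i> / of_nat p) ^ j) = 0"
proof -
  define \<alpha> where "\<alpha> = exp (2 * of_real pi * \<i> / of_nat p)"
  have pnz: "(of_nat p :: complex) \<noteq> 0" using p2 by simp
  have ap: "\<alpha> ^ p = 1"
  proof -
    have "\<alpha> ^ p = exp (of_nat p * (2 * of_real pi * \<i> / of_nat p))"
      unfolding \<alpha>_def by (rule exp_of_nat_mult[symmetric])
    also have "of_nat p * (2 * of_real pi * \<i> / of_nat p) = 2 * of_real pi * \<i>"
      using pnz by (simp add: field_simps)
    finally show ?thesis by simp
  qed
  have an1: "\<alpha> \<noteq> 1"
  proof
    assume "\<alpha> = 1"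
    then obtain n :: int where n: "Im (2 * of_real pi * \<i> / of_nat p) = of_int (2 * n) * pi"
      unfolding \<alpha>_def exp_eq_1 by blast
    have "Im (2 * of_real pi * \<i> / of_nat p) = 2 * pi / real p"
      by (simp add: Im_divide_of_nat)
    with n have "2 * pi / real p = of_int (2 * n) * pi" by simp
    then have "2 * pi = of_int (2 * n) * pi * real p" using p2 by (simp add: field_simps)
    then have "1 = real_of_int n * real p" using pi_gt_zero by (simp add: algebra_simps)
    then have "real_of_int (n * int p) = 1" by simp
    then have "n * int p = 1" by linarith
    then have "int p = 1" using zmult_eq_1_iff[of n "int p"] by auto
    then show False using p2 by simp
  qed
  show ?thesis unfolding \<alpha>_def[symmetric] using geometric_sum[OF an1, of p] ap by simp
qed

lemma idx_bij: "bij_betw (idx :: 'n::finite \<Rightarrow> nat) UNIV {..<CARD('n)}"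
proof -
  have "\<exists>f. bij_betw f (UNIV::'n set) {..<CARD('n)}"
    using ex_bij_betw_finite_nat[of "UNIV::'n set"] by (simp add: atLeast0LessThan)
  then show ?thesis unfolding idx_def by (rule someI_ex)
qed

lemma trace_e:
  assumes p2: "p \<ge> 2" and dvd: "p dvd CARD('n::finite)"
  shows "trace (diag_mat (\<lambda>i::'n. exp (2 * of_real pi * \<i> / of_nat p) ^ (idx i div (CARD('n) div p)))) = 0"
proof -
  define \<alpha> where "\<alpha> = exp (2 * of_real pi * \<i> / of_nat p)"
  define k where "k = CARD('n) div p"
  have n: "CARD('n) = p * k" using dvd unfolding k_def by simp
  have kpos: "k > 0" using n by (metis mult_0_right not_gr0 zero_less_card_finite)
  have "trace (diag_mat (\<lambda>i::'n. \<alpha> ^ (idx i div k))) = (\<Sum>i::'n\<in>UNIV. \<alpha> ^ (idx i div k))"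
    by (simp add: trace_def diag_nth)
  also have "\<dots> = (\<Sum>m<CARD('n). \<alpha> ^ (m div k))"
    using sum.reindex_bij_betw[OF idx_bij, of "\<lambda>m. \<alpha> ^ (m div k)"] by simp
  also have "\<dots> = (\<Sum>q<p. \<Sum>m\<in>{q * k..<q * k + k}. \<alpha> ^ (m div k))"
    unfolding n by (simp add: sum.nat_group mult.commute)
  also have "\<dots> = (\<Sum>q<p. of_nat k * \<alpha> ^ q)"
  proof (rule sum.cong[OF refl])
    fix q assume "q \<in> {..<p}"
    have "(\<Sum>m\<in>{q * k..<q * k + k}. \<alpha> ^ (m div k)) = (\<Sum>m\<in>{q * k..<q * k + k}. \<alpha> ^ q)"
    proof (rule sum.cong[OF refl])
      fix m assume m: "m \<in> {q * k..<q * k + k}"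
      then obtain r where r: "m = q * k + r" "r < k" by (metis add_less_cancel_left atLeastLessThan_iff le_Suc_ex)
      then have "m div k = q" using kpos by simp
      then show "\<alpha> ^ (m div k) = \<alpha> ^ q" by simp
    qed
    then show "(\<Sum>m\<in>{q * k..<q * k + k}. \<alpha> ^ (m div k)) = of_nat k * \<alpha> ^ q" by simp
  qed
  also have "\<dots> = of_nat k * (\<Sum>q<p. \<alpha> ^ q)" by (simp add: sum_distrib_left)
  also have "\<dots> = 0" unfolding \<alpha>_def using alpha_sum[OF p2] by simp
  finally show ?thesis unfolding \<alpha>_def k_def .
qed



theorem corollary4p30:
  fixes p s r :: nat and A :: "(complex^'n::finite^'n) set set"
  assumes "prime p" and "odd p"
    and "s \<ge> 1" and "p ^ s dvd CARD('n)" and "\<not> p ^ (s + 1) dvd CARD('n)"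
    and "elem_abelian_p_subgroup p r A" and "toral A"
    and "1 \<le> r" and "r \<le> s"
    and "connectedin (PGL_top :: (complex^'n^'n) set topology) (pgl_centralizer A)"
  shows "\<exists>x \<in> A. group.ord PGL x = p \<and>
           \<not> (\<exists>g \<in> carrier PGL. g \<otimes>\<^bsub>PGL\<^esub> x \<otimes>\<^bsub>PGL\<^esub> inv\<^bsub>PGL\<^esub> g = e_elt p)"
proof (rule ccontr)
  assume neg: "\<not> (\<exists>x \<in> A. group.ord PGL x = p \<and>
           \<not> (\<exists>g \<in> carrier PGL. g \<otimes>\<^bsub>PGL\<^esub> x \<otimes>\<^bsub>PGL\<^esub> inv\<^bsub>PGL\<^esub> g = e_elt p))"
  interpret Gp: group PGL by (rule group_PGL)
  have p2: "p \<ge> 2" using assms(1) prime_ge_2_nat by blast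
  have pdvd: "p dvd CARD('n)"
    using assms(3,4) by (metis dvd_power dvd_trans not_one_le_zero le_0_eq gr0I)
  have sub: "subgroup A PGL" and pw: "\<And>x. x \<in> A \<Longrightarrow> x [^]\<^bsub>PGL\<^esub> p = \<one>\<^bsub>PGL\<^esub>"
    and finA: "finite A" and cardA: "card A = p ^ r"
    using assms(6) unfolding elem_abelian_p_subgroup_def by auto
  obtain T where T: "maximal_torus T" "A \<subseteq> T" using assms(7) unfolding toral_def by blast
  obtain g where g: "g \<in> carrier PGL" "T = (\<lambda>t. g \<otimes>\<^bsub>PGL\<^esub> t \<otimes>\<^bsub>PGL\<^esub> inv\<^bsub>PGL\<^esub> g) ` diag_torus"
    using T(1) unfolding maximal_torus_def by blast
  obtain G where G: "g = pcls G" "invertible G" using g(1) by (auto simp: PGL_carrier)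
  have lift: "\<exists>d. (\<forall>i. d i \<noteq> 0) \<and> x = pcls (G ** diag_mat d ** matrix_inv G)" if x: "x \<in> A" for x
  proof -
    obtain t where t: "t \<in> diag_torus" "x = g \<otimes>\<^bsub>PGL\<^esub> t \<otimes>\<^bsub>PGL\<^esub> inv\<^bsub>PGL\<^esub> g"
      using x T(2) g(2) by blast
    obtain d where d: "t = pcls (diag_mat d)" "\<forall>i. d i \<noteq> 0" using t(1) unfolding diag_torus_def by blast
    have "x = pcls (G ** diag_mat d ** matrix_inv G)"
      unfolding t(2) d(1) G(1) PGL_inv[OF G(2)] pcls_mult ..
    then show ?thesis using d(2) by blast
  qed
  interpret L: lsetting A G
    by (rule lsetting.intro[OF sub finA G(2) lift])
  have H: "(\<Sum>k\<in>UNIV. L.chi k x) = 0" if x: "x \<in> A" and xn: "x \<noteq> \<one>\<^bsub>PGL\<^esub>" for x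
  proof -
    have xc: "x \<in> carrier PGL" by (rule L.AinG[OF x])
    have "group.ord PGL x dvd p" using Gp.pow_eq_id[OF xc] pw[OF x] by simp
    then have "group.ord PGL x = 1 \<or> group.ord PGL x = p" using assms(1) prime_nat_iff by blast
    then have op: "group.ord PGL x = p" using Gp.ord_eq_1[OF xc] xn by blast
    then obtain h where h: "h \<in> carrier PGL" "h \<otimes>\<^bsub>PGL\<^esub> x \<otimes>\<^bsub>PGL\<^esub> inv\<^bsub>PGL\<^esub> h = e_elt p"
      using neg x by blast
    obtain Hm where Hm: "h = pcls Hm" "invertible Hm" using h(1) by (auto simp: PGL_carrier)
    define Xx where "Xx = G ** diag_mat (L.dl x) ** matrix_inv G"
    have ex: "x = pcls Xx" unfolding Xx_def using L.dl[OF x] by blast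
    define E where "E = diag_mat (\<lambda>i::'n. exp (2 * of_real pi * \<i> / of_nat p) ^ (idx i div (CARD('n) div p)))"
    have "pcls (Hm ** Xx ** matrix_inv Hm) = pcls E"
      using h(2) unfolding ex Hm(1) PGL_inv[OF Hm(2)] pcls_mult e_elt_def E_def .
    then obtain c where c: "c \<noteq> 0" "E = smul c (Hm ** Xx ** matrix_inv Hm)" using pcls_eq by blast
    have "0 = trace E" unfolding E_def using trace_e[OF p2 pdvd] by simp
    also have "\<dots> = c * trace Xx" unfolding c(2) trace_smul trace_conj[OF Hm(2)] ..
    also have "trace Xx = (\<Sum>k\<in>UNIV. L.dl x k)" unfolding Xx_def trace_conj[OF G(2)] by (rule trace_diag)
    finally have "(\<Sum>k\<in>UNIV. L.dl x k) = 0" using c(1) by simp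
    then show ?thesis unfolding L.chi_def by (simp add: sum_divide_distrib[symmetric])
  qed
  obtain x1 where x1: "x1 \<in> A" "x1 \<noteq> \<one>\<^bsub>PGL\<^esub>"
  proof (rule ccontr)
    assume "\<not> thesis"
    with that have "A \<subseteq> {\<one>\<^bsub>PGL\<^esub>}" by blast
    then have "card A \<le> 1" using card_mono[of "{\<one>\<^bsub>PGL\<^esub>}" A] by simp
    moreover have "p \<le> p ^ r" using assms(8) p2 by (simp add: self_le_power)
    ultimately show False using cardA p2 by simp
  qed
  have "\<not> connectedin PGL_top (pgl_centralizer A)" by (rule L.disconnected[OF H x1])
  then show False using assms(10) by simp
qed


end
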